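(* Let $G$ be a simple graph with at least one edge on $n=pq$ vertices labelled $u_iw_j$ ($i\in\{1,\dots,p\}$, $j\in\{1,\dots,q\}$). If the density matrix $\rho(G)$ is separable in $\mathbb{C}^p_A\otimes\mathbb{C}^q_B$, then $\Delta(G)=\Delta(G^{\Gamma_B})$.
   Context: For a simple graph $G=(V,E)$ on vertices $v_1,\dots,v_n$: $M(G)$ is the adjacency matrix, $\Delta(G)$ the diagonal degree matrix ($(i,i)$ entry = degree of $v_i$), $L(G)=\Delta(G)-M(G)$ the Laplacian, and the density matrix of $G$ is $\rho(G)=\frac{1}{2|E|}L(G)$ (defined when $|E|\ge1$). When $n=pq$, the vertices are labelled as ordered pairs $u_iw_j$ ($1\le i\le p$, $1\le j\le q$), and vertex $u_iw_j$ is identified with the basis vector $|u_i\rangle\otimes|w_j\rangle$, where $\{|u_i\rangle\}$ and $\{|w_j\rangle\}$ are orthonormal bases of $\mathbb{C}^p_A$ and $\mathbb{C}^q_B$; matrices indexed by vertices are thus operators on $\mathbb{C}^p_A\otimes\mathbb{C}^q_B$. The partial transpose of $G$ is the graph $G^{\Gamma_B}=(V,E')$ with $\{u_iw_j,u_kw_l\}\in E'$ iff $\{u_iw_l,u_kw_j\}\in E$. A density matrix on $\mathbb{C}^p_A\otimes\mathbb{C}^q_B$ is separable if it is a convex combination of product states $|a\rangle\langle a|\otimes|b\rangle\langle b|$. *)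

theory Defs
  imports Complex_Main
begin

text \<open>Vertices u_i w_j are pairs (i,j) with 0 \<le> i < p, 0 \<le> j < q (0-based labels).
  The vertex (i,j) corresponds to the basis vector |u_i> \<otimes> |w_j>.\<close>

type_synonym vtx = "nat \<times> nat"

definition verts :: "nat \<Rightarrow> nat \<Rightarrow> vtx set" where
  "verts p q = {0..<p} \<times> {0..<q}"

definition simple_graph :: "nat \<Rightarrow> nat \<Rightarrow> (vtx \<Rightarrow> vtx \<Rightarrow> bool) \<Rightarrow> bool" where
  "simple_graph p q E \<longleftrightarrow>
     (\<forall>v w. E v w \<longrightarrow> v \<in> verts p q \<and> w \<in> verts p q) \<and>
     (\<forall>v w. E v w \<longrightarrow> E w v) \<and> (\<forall>v. \<not> E v v)"

definition edges :: "(vtx \<Rightarrow> vtx \<Rightarrow> bool) \<Rightarrow> vtx set set" where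
  "edges E = {{v, w} | v w. E v w}"

definition degree :: "nat \<Rightarrow> nat \<Rightarrow> (vtx \<Rightarrow> vtx \<Rightarrow> bool) \<Rightarrow> vtx \<Rightarrow> nat" where
  "degree p q E v = card {w \<in> verts p q. E v w}"

definition degree_matrix :: "nat \<Rightarrow> nat \<Rightarrow> (vtx \<Rightarrow> vtx \<Rightarrow> bool) \<Rightarrow> vtx \<Rightarrow> vtx \<Rightarrow> complex" where
  "degree_matrix p q E v w = (if v = w then of_nat (degree p q E v) else 0)"

definition adj_matrix :: "(vtx \<Rightarrow> vtx \<Rightarrow> bool) \<Rightarrow> vtx \<Rightarrow> vtx \<Rightarrow> complex" where
  "adj_matrix E v w = (if E v w then 1 else 0)"

definition laplacian :: "nat \<Rightarrow> nat \<Rightarrow> (vtx \<Rightarrow> vtx \<Rightarrow> bool) \<Rightarrow> vtx \<Rightarrow> vtx \<Rightarrow> complex" where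
  "laplacian p q E v w = degree_matrix p q E v w - adj_matrix E v w"

definition density :: "nat \<Rightarrow> nat \<Rightarrow> (vtx \<Rightarrow> vtx \<Rightarrow> bool) \<Rightarrow> vtx \<Rightarrow> vtx \<Rightarrow> complex" where
  "density p q E v w = laplacian p q E v w / of_nat (2 * card (edges E))"

definition partial_transpose_B :: "(vtx \<Rightarrow> vtx \<Rightarrow> bool) \<Rightarrow> vtx \<Rightarrow> vtx \<Rightarrow> bool" where
  "partial_transpose_B E v w = E (fst v, snd w) (fst w, snd v)"

text \<open>Product state |a><a| \<otimes> |b><b| with entries indexed by vertex pairs.\<close>
definition product_state :: "(nat \<Rightarrow> complex) \<Rightarrow> (nat \<Rightarrow> complex) \<Rightarrow> vtx \<Rightarrow> vtx \<Rightarrow> complex" where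
  "product_state a b v w = a (fst v) * cnj (a (fst w)) * b (snd v) * cnj (b (snd w))"

definition unit_vec :: "nat \<Rightarrow> (nat \<Rightarrow> complex) \<Rightarrow> bool" where
  "unit_vec d a \<longleftrightarrow> (\<Sum>i<d. (cmod (a i))\<^sup>2) = 1"

definition separable :: "nat \<Rightarrow> nat \<Rightarrow> (vtx \<Rightarrow> vtx \<Rightarrow> complex) \<Rightarrow> bool" where
  "separable p q \<rho> \<longleftrightarrow>
    (\<exists>(m::nat) (c::nat \<Rightarrow> real) (a::nat \<Rightarrow> nat \<Rightarrow> complex) (b::nat \<Rightarrow> nat \<Rightarrow> complex).
       (\<forall>k<m. c k \<ge> 0 \<and> unit_vec p (a k) \<and> unit_vec q (b k)) \<and>
       (\<Sum>k<m. c k) = 1 \<and>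
       (\<forall>v\<in>verts p q. \<forall>w\<in>verts p q.
          \<rho> v w = (\<Sum>k<m. of_real (c k) * product_state (a k) (b k) v w)))"

end

theory Submission
  imports Defs
begin

lemma sumV: "(\<Sum>v\<in>verts p q. g (fst v) * h (snd v)) = (\<Sum>i\<in>{0..<p}. g i) * (\<Sum>j\<in>{0..<q}. (h j :: complex))"
  unfolding verts_def by (simp add: sum.cartesian_product' sum_product)

lemma lap_row: "(\<Sum>w\<in>verts p q. laplacian p q E v w) = of_nat (degree p q E v) - of_nat (card {w\<in>verts p q. E v w})"
  if "v \<in> verts p q" for v
proof -
  have "(\<Sum>w\<in>verts p q. degree_matrix p q E v w) = of_nat (degree p q E v)"
    using that unfolding degree_matrix_def by (subst sum.delta') (simp_all add: verts_def)
  moreover have "(\<Sum>w\<in>verts p q. adj_matrix E v w) = of_nat (card {w\<in>verts p q. E v w})"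
    by (simp add: adj_matrix_def sum.If_cases verts_def Int_def)
  ultimately show ?thesis by (simp add: laplacian_def sum_subtractf)
qed

lemma lap_rowT: "(\<Sum>w\<in>verts p q. laplacian p q E (fst v, snd w) (fst w, snd v))
   = of_nat (degree p q E v) - of_nat (degree p q (partial_transpose_B E) v)"
  if "v \<in> verts p q" for v
proof -
  have eq: "((fst v, snd w) = (fst w, snd v)) = (w = v)" for w
    by (cases v; cases w) auto
  have "(\<Sum>w\<in>verts p q. degree_matrix p q E (fst v, snd w) (fst w, snd v)) = of_nat (degree p q E v)"
    using that unfolding degree_matrix_def eq by (subst sum.delta) (simp_all add: verts_def)
  moreover have "(\<Sum>w\<in>verts p q. adj_matrix E (fst v, snd w) (fst w, snd v)) = of_nat (degree p q (partial_transpose_B E) v)"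
    by (simp add: adj_matrix_def sum.If_cases verts_def Int_def degree_def partial_transpose_B_def)
  ultimately show ?thesis by (simp add: laplacian_def sum_subtractf)
qed

theorem theorem2:
  fixes p q :: nat and E :: "vtx \<Rightarrow> vtx \<Rightarrow> bool"
  assumes "simple_graph p q E"
    and "card (edges E) \<ge> 1"
    and "separable p q (density p q E)"
  shows "\<forall>v\<in>verts p q. \<forall>w\<in>verts p q.
           degree_matrix p q E v w = degree_matrix p q (partial_transpose_B E) v w"
proof -
  define V where "V = verts p q"
  obtain m and c :: "nat \<Rightarrow> real" and a b where c0': "\<forall>k<m. c k \<ge> 0 \<and> unit_vec p (a k) \<and> unit_vec q (b k)"
    and rho: "\<forall>v\<in>V. \<forall>w\<in>V. density p q E v w = (\<Sum>k<m. of_real (c k) * product_state (a k) (b k) v w)"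
    using assms(3) unfolding separable_def V_def by blast
  have c0: "\<forall>k<m. c k \<ge> 0" using c0' by blast
  define D :: complex where "D = of_nat (2 * card (edges E))"
  have D0: "D \<noteq> 0" using assms(2) by (simp add: D_def)
  define al where "al k = (\<Sum>i\<in>{0..<p}. a k i)" for k
  define be where "be k = (\<Sum>j\<in>{0..<q}. b k j)" for k
  have vin: "(fst v, snd w) \<in> V" "(fst w, snd v) \<in> V" if "v \<in> V" "w \<in> V" for v w
    using that by (auto simp: V_def verts_def)
  have tot_ps: "(\<Sum>v\<in>V. \<Sum>w\<in>V. product_state (a k) (b k) v w) = (al k * be k) * cnj (al k * be k)" for k
  proof -
    have "(\<Sum>v\<in>V. \<Sum>w\<in>V. product_state (a k) (b k) v w)
        = (\<Sum>v\<in>V. (a k (fst v) * b k (snd v)) * (\<Sum>w\<in>V. cnj (a k (fst w)) * cnj (b k (snd w))))"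
      by (simp add: product_state_def sum_distrib_left mult_ac)
    also have "\<dots> = (\<Sum>v\<in>V. a k (fst v) * b k (snd v)) * (\<Sum>w\<in>V. cnj (a k (fst w)) * cnj (b k (snd w)))"
      by (simp add: sum_distrib_right)
    also have "\<dots> = (al k * be k) * (cnj (al k) * cnj (be k))"
      using sumV[of "\<lambda>i. cnj (a k i)" "\<lambda>j. cnj (b k j)" p q] sumV[of "a k" "b k" p q]
      unfolding V_def al_def be_def by (simp add: cnj_sum sumV[where g="\<lambda>i. cnj (a k i)"] sumV[where g="a k"])
    finally show ?thesis by simp
  qed
  have tot0: "(\<Sum>v\<in>V. \<Sum>w\<in>V. density p q E v w) = 0"
    using lap_row by (simp add: V_def density_def sum_divide_distrib[symmetric] degree_def)
  have "(\<Sum>v\<in>V. \<Sum>w\<in>V. density p q E v w) = (\<Sum>k<m. of_real (c k) * ((al k * be k) * cnj (al k * be k)))"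
  proof -
    have "(\<Sum>v\<in>V. \<Sum>w\<in>V. density p q E v w) = (\<Sum>v\<in>V. \<Sum>w\<in>V. \<Sum>k<m. of_real (c k) * product_state (a k) (b k) v w)"
      using rho by (intro sum.cong) auto
    also have "\<dots> = (\<Sum>v\<in>V. \<Sum>k<m. \<Sum>w\<in>V. of_real (c k) * product_state (a k) (b k) v w)"
      by (intro sum.cong refl) (rule sum.swap)
    also have "\<dots> = (\<Sum>k<m. \<Sum>v\<in>V. \<Sum>w\<in>V. of_real (c k) * product_state (a k) (b k) v w)"
      by (rule sum.swap)
    also have "\<dots> = (\<Sum>k<m. of_real (c k) * (\<Sum>v\<in>V. \<Sum>w\<in>V. product_state (a k) (b k) v w))"
      by (simp add: sum_distrib_left)
    finally show ?thesis by (simp add: tot_ps)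
  qed
  also have "\<dots> = of_real (\<Sum>k<m. c k * (cmod (al k * be k))\<^sup>2)"
  proof -
    have "of_real (c k) * ((al k * be k) * cnj (al k * be k)) = of_real (c k * (cmod (al k * be k))\<^sup>2)" for k
      by (simp only: complex_norm_square of_real_mult)
    hence "(\<Sum>k<m. of_real (c k) * ((al k * be k) * cnj (al k * be k))) = (\<Sum>k<m. of_real (c k * (cmod (al k * be k))\<^sup>2))"
      by (intro sum.cong) auto
    thus ?thesis by (simp only: of_real_sum)
  qed
  finally have "complex_of_real (\<Sum>k<m. c k * (cmod (al k * be k))\<^sup>2) = 0" using tot0 by metis
  hence "(\<Sum>k<m. c k * (cmod (al k * be k))\<^sup>2) = 0" by (simp only: of_real_eq_0_iff)
  hence each: "c k * (cmod (al k * be k))\<^sup>2 = 0" if "k < m" for k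
    using that c0 by (subst (asm) sum_nonneg_eq_0_iff) auto
  have zero: "of_real (c k) * (cnj (al k) * be k) = 0" if "k < m" for k
    using each[OF that] by auto
  show ?thesis
  proof (intro ballI)
    fix v w assume v: "v \<in> verts p q" and w: "w \<in> verts p q"
    have "(\<Sum>w\<in>V. density p q E (fst v, snd w) (fst w, snd v))
       = (\<Sum>k<m. of_real (c k) * (\<Sum>w\<in>V. product_state (a k) (b k) (fst v, snd w) (fst w, snd v)))"
      using v vin by (simp add: V_def rho sum_distrib_left cong: sum.cong) (rule sum.swap)
    also have "\<dots> = (\<Sum>k<m. of_real (c k) * (a k (fst v) * cnj (b k (snd v)) * (cnj (al k) * be k)))"
    proof (rule sum.cong)
      fix k
      have "(\<Sum>w\<in>V. product_state (a k) (b k) (fst v, snd w) (fst w, snd v))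
          = a k (fst v) * cnj (b k (snd v)) * (\<Sum>w\<in>V. cnj (a k (fst w)) * b k (snd w))"
        by (simp add: product_state_def sum_distrib_left mult_ac)
      also have "\<dots> = a k (fst v) * cnj (b k (snd v)) * (cnj (al k) * be k)"
        unfolding V_def al_def be_def by (simp add: cnj_sum sumV[where g="\<lambda>i. cnj (a k i)"] sumV[where g="a k"])
      finally show "of_real (c k) * (\<Sum>w\<in>V. product_state (a k) (b k) (fst v, snd w) (fst w, snd v))
        = of_real (c k) * (a k (fst v) * cnj (b k (snd v)) * (cnj (al k) * be k))" by simp
    qed simp
    also have "\<dots> = 0"
    proof (rule sum.neutral, intro ballI)
      fix k assume "k \<in> {..<m}"
      hence "c k = 0 \<or> al k = 0 \<or> be k = 0" using each[of k] by simp
      thus "of_real (c k) * (a k (fst v) * cnj (b k (snd v)) * (cnj (al k) * be k)) = 0" by auto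
    qed
    finally have "(\<Sum>w\<in>V. density p q E (fst v, snd w) (fst w, snd v)) = 0" .
    hence "(\<Sum>w\<in>V. laplacian p q E (fst v, snd w) (fst w, snd v)) / D = 0"
      by (simp add: density_def D_def sum_divide_distrib[symmetric])
    hence "of_nat (degree p q E v) - of_nat (degree p q (partial_transpose_B E) v) = (0::complex)"
      using D0 lap_rowT[OF v] by (simp add: V_def)
    hence "degree p q E v = degree p q (partial_transpose_B E) v" by simp
    thus "degree_matrix p q E v w = degree_matrix p q (partial_transpose_B E) v w"
      by (auto simp add: degree_matrix_def)
  qed
qed

end
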